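(* Let $a_n$ denote the number of permutations of $[n]$ avoiding the vincular pattern 12–34. Then $$\liminf_{n\to\infty}\sqrt[n]{a_n/n!}\;\ge\;\frac{1}{\log 4}\approx 0.72134752.$$
   Context: A permutation $\sigma$ of $[n]$ contains the vincular pattern 12–34 if there exist indices $i<j$ with $\sigma(i)<\sigma(i+1)<\sigma(j)<\sigma(j+1)$. It avoids it otherwise. $\log$ denotes the natural logarithm. *)

theory Defs
  imports "HOL-Analysis.Analysis" "HOL-Combinatorics.Permutations"
begin

definition contains_12_34 :: "nat \<Rightarrow> (nat \<Rightarrow> nat) \<Rightarrow> bool" where
  "contains_12_34 n \<sigma> \<longleftrightarrow>
     (\<exists>i j. 1 \<le> i \<and> i < j \<and> j + 1 \<le> n \<and>
        \<sigma> i < \<sigma> (i + 1) \<and> \<sigma> (i + 1) < \<sigma> j \<and> \<sigma> j < \<sigma> (j + 1))"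

definition avoiders_12_34 :: "nat \<Rightarrow> (nat \<Rightarrow> nat) set" where
  "avoiders_12_34 n = {\<sigma>. \<sigma> permutes {1..n} \<and> \<not> contains_12_34 n \<sigma>}"

definition a_12_34 :: "nat \<Rightarrow> nat" where
  "a_12_34 n = card (avoiders_12_34 n)"

end

theory Submission
  imports Defs "HOL-Real_Asymp.Real_Asymp"
begin

definition blk :: "nat \<Rightarrow> (nat\<Rightarrow>nat) \<Rightarrow> (nat\<Rightarrow>nat) \<Rightarrow> nat \<Rightarrow> nat" where
  "blk h f g v = (if v \<le> h then g v else f v)"
definition rr :: "nat \<Rightarrow> nat \<Rightarrow> nat" where
  "rr h v = (if v \<le> h then 4*h - v else 2*h - v)"
definition key :: "nat \<Rightarrow> (nat\<Rightarrow>nat) \<Rightarrow> (nat\<Rightarrow>nat) \<Rightarrow> nat \<Rightarrow> nat" where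
  "key h f g v = blk h f g v * (4*h) + rr h v"
definition rank :: "nat \<Rightarrow> (nat\<Rightarrow>nat) \<Rightarrow> (nat\<Rightarrow>nat) \<Rightarrow> nat \<Rightarrow> nat" where
  "rank h f g v = Suc (card {w \<in> {1..2*h}. key h f g w < key h f g v})"
definition perm :: "nat \<Rightarrow> (nat\<Rightarrow>nat) \<Rightarrow> (nat\<Rightarrow>nat) \<Rightarrow> nat \<Rightarrow> nat" where
  "perm h f g p = (if p \<in> {1..2*h} then inv_into {1..2*h} (rank h f g) p else p)"

lemma lex_less:
  fixes a b m r s :: nat
  assumes "r < m" "s < m"
  shows "(a*m + r < b*m + s) \<longleftrightarrow> (a < b \<or> a = b \<and> r < s)"
proof -
  have *: "a*m + r < b*m + s" if "a < b" "r < m" for a b r s :: nat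
  proof -
    have "Suc a \<le> b" using that by simp
    hence "Suc a * m \<le> b * m" by (rule mult_right_mono) simp
    hence "m + a*m \<le> b*m" by simp
    thus ?thesis using that by linarith
  qed
  show ?thesis
  proof
    assume h: "a*m + r < b*m + s"
    show "a < b \<or> a = b \<and> r < s"
    proof (cases "a < b")
      case False
      show ?thesis
      proof (cases "a = b")
        case True thus ?thesis using h by simp
      next
        case False
        hence "b < a" using \<open>\<not> a < b\<close> by simp
        hence "b*m + s < a*m + r" using *[of b a s r] assms by simp
        thus ?thesis using h by simp
      qed
    qed simp
  next
    assume "a < b \<or> a = b \<and> r < s"
    thus "a*m + r < b*m + s" using * assms by auto
  qed
qed

context
  fixes h :: nat and f g :: "nat \<Rightarrow> nat"
begin

abbreviation "N \<equiv> {1..2*h}"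

lemma rr_lt: "v \<in> N \<Longrightarrow> rr h v < 4*h"
  unfolding rr_def by auto

lemma key_less: "v \<in> N \<Longrightarrow> w \<in> N \<Longrightarrow>
   key h f g v < key h f g w \<longleftrightarrow> blk h f g v < blk h f g w \<or> blk h f g v = blk h f g w \<and> rr h v < rr h w"
  unfolding key_def using lex_less rr_lt by blast

lemma rr_less: "v \<in> N \<Longrightarrow> w \<in> N \<Longrightarrow>
   rr h v < rr h w \<longleftrightarrow> (h < v \<and> w \<le> h) \<or> ((v \<le> h \<longleftrightarrow> w \<le> h) \<and> w < v)"
  unfolding rr_def by auto

lemma rr_inj: "v \<in> N \<Longrightarrow> w \<in> N \<Longrightarrow> rr h v = rr h w \<Longrightarrow> v = w"
  unfolding rr_def by (auto split: if_splits)

lemma key_inj: "v \<in> N \<Longrightarrow> w \<in> N \<Longrightarrow> key h f g v = key h f g w \<Longrightarrow> v = w"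
proof -
  assume a: "v \<in> N" "w \<in> N" "key h f g v = key h f g w"
  hence "\<not> key h f g v < key h f g w" "\<not> key h f g w < key h f g v" by auto
  hence "blk h f g v = blk h f g w" "\<not> rr h v < rr h w" "\<not> rr h w < rr h v"
    using key_less[of v w] key_less[of w v] a by auto
  hence "rr h v = rr h w" by simp
  thus "v = w" using rr_inj a by blast
qed

lemma rank_mono: "v \<in> N \<Longrightarrow> w \<in> N \<Longrightarrow> key h f g v < key h f g w \<Longrightarrow> rank h f g v < rank h f g w"
  unfolding rank_def
proof -
  assume a: "v \<in> N" "w \<in> N" "key h f g v < key h f g w"
  have "{x \<in> N. key h f g x < key h f g v} \<subset> {x \<in> N. key h f g x < key h f g w}"
    using a by auto
  hence "card {x \<in> N. key h f g x < key h f g v} < card {x \<in> N. key h f g x < key h f g w}"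
    by (rule psubset_card_mono[rotated]) simp
  thus "Suc (card {x \<in> N. key h f g x < key h f g v}) < Suc (card {x \<in> N. key h f g x < key h f g w})"
    by simp
qed

lemma rank_less_iff: "v \<in> N \<Longrightarrow> w \<in> N \<Longrightarrow> rank h f g v < rank h f g w \<longleftrightarrow> key h f g v < key h f g w"
proof
  assume a: "v \<in> N" "w \<in> N" "rank h f g v < rank h f g w"
  show "key h f g v < key h f g w"
  proof (rule ccontr)
    assume "\<not> key h f g v < key h f g w"
    hence "key h f g v = key h f g w \<or> key h f g w < key h f g v" by auto
    thus False
    proof
      assume "key h f g v = key h f g w"
      hence "v = w" using key_inj a by blast
      thus False using a by simp
    next
      assume "key h f g w < key h f g v"
      hence "rank h f g w < rank h f g v" using rank_mono a by blast
      thus False using a by simp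
    qed
  qed
qed (rule rank_mono)

lemma rank_inj: "inj_on (rank h f g) N"
proof (rule inj_onI)
  fix v w assume a: "v \<in> N" "w \<in> N" "rank h f g v = rank h f g w"
  hence "\<not> key h f g v < key h f g w" "\<not> key h f g w < key h f g v"
    using rank_mono[of v w] rank_mono[of w v] by auto
  hence "key h f g v = key h f g w" by simp
  thus "v = w" using key_inj a by blast
qed

lemma rank_range: "v \<in> N \<Longrightarrow> rank h f g v \<in> N"
proof -
  assume v: "v \<in> N"
  have "{x \<in> N. key h f g x < key h f g v} \<subseteq> N - {v}" by auto
  hence "card {x \<in> N. key h f g x < key h f g v} \<le> card (N - {v})" by (intro card_mono) auto
  also have "\<dots> = 2*h - 1" using v by simp
  finally show ?thesis using v unfolding rank_def by auto
qed

lemma rank_bij: "bij_betw (rank h f g) N N"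
proof -
  have "rank h f g ` N \<subseteq> N" using rank_range by auto
  hence "rank h f g ` N = N" using endo_inj_surj[of N "rank h f g"] rank_inj by simp
  thus ?thesis unfolding bij_betw_def using rank_inj by simp
qed

lemma perm_permutes: "perm h f g permutes N"
  apply (rule bij_imp_permutes)
  subgoal
  proof -
    have "bij_betw (inv_into N (rank h f g)) N N" using bij_betw_inv_into[OF rank_bij] .
    thus ?thesis by (rule bij_betw_cong[THEN iffD1, rotated]) (simp add: perm_def)
  qed
  by (auto simp: perm_def)

lemma perm_in: "p \<in> N \<Longrightarrow> perm h f g p \<in> N"
  using permutes_in_image[OF perm_permutes, of p] by simp

lemma rank_perm: "p \<in> N \<Longrightarrow> rank h f g (perm h f g p) = p"
proof -
  assume p: "p \<in> N"
  have "rank h f g ` N = N" using rank_bij by (simp add: bij_betw_def)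
  hence "p \<in> rank h f g ` N" using p by simp
  hence "rank h f g (inv_into N (rank h f g) p) = p" by (rule f_inv_into_f)
  thus ?thesis using p unfolding perm_def by simp
qed

lemma perm_rank: "v \<in> N \<Longrightarrow> perm h f g (rank h f g v) = v"
proof -
  assume v: "v \<in> N"
  have "inv_into N (rank h f g) (rank h f g v) = v" by (rule inv_into_f_f[OF rank_inj v])
  thus ?thesis using rank_range[OF v] unfolding perm_def by simp
qed

lemma key_perm_less: "p \<in> N \<Longrightarrow> q \<in> N \<Longrightarrow> key h f g (perm h f g p) < key h f g (perm h f g q) \<longleftrightarrow> p < q"
  using rank_less_iff[of "perm h f g p" "perm h f g q"] perm_in rank_perm by simp

lemma no_between:
  assumes "p \<in> N" "Suc p \<in> N" "u \<in> N" "key h f g (perm h f g p) < key h f g u"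
    "key h f g u < key h f g (perm h f g (Suc p))"
  shows False
proof -
  have u: "u = perm h f g (rank h f g u)" using perm_rank assms by simp
  have "p < rank h f g u" "rank h f g u < Suc p"
    using key_perm_less[of p "rank h f g u"] key_perm_less[of "rank h f g u" "Suc p"] assms rank_range u
    by auto
  thus False by simp
qed


lemma blk_key: "v \<in> N \<Longrightarrow> w \<in> N \<Longrightarrow> blk h f g v < blk h f g w \<Longrightarrow> key h f g v < key h f g w"
  using key_less by blast

lemma ascent:
  assumes covS: "\<And>v. v \<in> N \<Longrightarrow> \<exists>u\<in>{1..h}. blk h f g u = blk h f g v"
      and covL: "\<And>v. v \<in> N \<Longrightarrow> \<exists>u\<in>{h<..2*h}. blk h f g u = blk h f g v"
      and p: "1 \<le> p" "Suc p \<le> 2*h" and asc: "perm h f g p < perm h f g (Suc p)"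
  shows "perm h f g p \<le> h \<and> h < perm h f g (Suc p)"
proof -
  define v where "v = perm h f g p"
  define w where "w = perm h f g (Suc p)"
  have pN: "p \<in> N" "Suc p \<in> N" using p by auto
  have vN: "v \<in> N" and wN: "w \<in> N" unfolding v_def w_def using perm_in pN by auto
  have vw: "v < w" using asc unfolding v_def w_def .
  have kvw: "key h f g v < key h f g w" unfolding v_def w_def using key_perm_less pN by simp
  have bvw: "blk h f g v < blk h f g w"
  proof (rule ccontr)
    assume "\<not> ?thesis"
    hence "rr h v < rr h w" using kvw key_less vN wN by blast
    thus False using rr_less vN wN vw by auto
  qed
  have "v \<le> h"
  proof (rule ccontr)
    assume hv: "\<not> v \<le> h"
    obtain u where u: "u \<in> {1..h}" "blk h f g u = blk h f g v" using covS vN by blast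
    have uN: "u \<in> N" using u by auto
    have "rr h v < rr h u" using rr_less[OF vN uN] hv u by auto
    hence "key h f g v < key h f g u" using key_less[OF vN uN] u by simp
    moreover have "key h f g u < key h f g w" using blk_key[OF uN wN] u bvw by simp
    ultimately show False using no_between[OF pN, of u] uN unfolding v_def w_def by blast
  qed
  moreover have "h < w"
  proof (rule ccontr)
    assume hw: "\<not> h < w"
    obtain u where u: "u \<in> {h<..2*h}" "blk h f g u = blk h f g w" using covL wN by blast
    have uN: "u \<in> N" using u by auto
    have "rr h u < rr h w" using rr_less[OF uN wN] hw u by auto
    hence "key h f g u < key h f g w" using key_less[OF uN wN] u by simp
    moreover have "key h f g v < key h f g u" using blk_key[OF vN uN] u bvw by simp
    ultimately show False using no_between[OF pN, of u] uN unfolding v_def w_def by blast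
  qed
  ultimately show ?thesis unfolding v_def w_def by simp
qed

lemma avoid:
  assumes covS: "\<And>v. v \<in> N \<Longrightarrow> \<exists>u\<in>{1..h}. blk h f g u = blk h f g v"
      and covL: "\<And>v. v \<in> N \<Longrightarrow> \<exists>u\<in>{h<..2*h}. blk h f g u = blk h f g v"
  shows "\<not> contains_12_34 (2*h) (perm h f g)"
proof
  assume "contains_12_34 (2*h) (perm h f g)"
  then obtain i j where ij: "1 \<le> i" "i < j" "j + 1 \<le> 2*h"
    "perm h f g i < perm h f g (i + 1)" "perm h f g (i + 1) < perm h f g j"
    "perm h f g j < perm h f g (j + 1)"
    unfolding contains_12_34_def by blast
  have "h < perm h f g (Suc i)" using ascent[OF covS covL, of i] ij by auto
  moreover have "perm h f g j \<le> h" using ascent[OF covS covL, of j] ij by auto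
  ultimately show False using ij by simp
qed

lemma blk_less_char:
  assumes covS: "\<And>v. v \<in> N \<Longrightarrow> \<exists>u\<in>{1..h}. blk h f g u = blk h f g v"
      and covL: "\<And>v. v \<in> N \<Longrightarrow> \<exists>u\<in>{h<..2*h}. blk h f g u = blk h f g v"
      and vN: "v \<in> N" and wN: "w \<in> N"
  shows "blk h f g v < blk h f g w \<longleftrightarrow>
    (\<exists>u\<in>{1..h}. \<exists>u'\<in>{h<..2*h}. \<not> key h f g u < key h f g v \<and> key h f g u < key h f g u'
        \<and> \<not> key h f g w < key h f g u')"
proof
  assume b: "blk h f g v < blk h f g w"
  obtain u where u: "u \<in> {1..h}" "\<not> key h f g u < key h f g v" "blk h f g u = blk h f g v"
  proof (cases "v \<le> h")
    case True thus ?thesis using that[of v] vN by auto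
  next
    case False
    obtain u where u: "u \<in> {1..h}" "blk h f g u = blk h f g v" using covS vN by blast
    have uN: "u \<in> N" using u by auto
    have "\<not> rr h u < rr h v" using rr_less[OF uN vN] u False by auto
    hence "\<not> key h f g u < key h f g v" using key_less[OF uN vN] u by simp
    thus ?thesis using that u by blast
  qed
  obtain u' where u': "u' \<in> {h<..2*h}" "\<not> key h f g w < key h f g u'" "blk h f g u' = blk h f g w"
  proof (cases "h < w")
    case True thus ?thesis using that[of w] wN by auto
  next
    case False
    obtain u' where u': "u' \<in> {h<..2*h}" "blk h f g u' = blk h f g w" using covL wN by blast
    have uN: "u' \<in> N" using u' by auto
    have "\<not> rr h w < rr h u'" using rr_less[OF wN uN] u' False by auto
    hence "\<not> key h f g w < key h f g u'" using key_less[OF wN uN] u' by simp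
    thus ?thesis using that u' by blast
  qed
  have "key h f g u < key h f g u'" using blk_key[of u u'] u u' b by auto
  thus "\<exists>u\<in>{1..h}. \<exists>u'\<in>{h<..2*h}. \<not> key h f g u < key h f g v \<and> key h f g u < key h f g u'
        \<and> \<not> key h f g w < key h f g u'" using u u' by blast
next
  assume "\<exists>u\<in>{1..h}. \<exists>u'\<in>{h<..2*h}. \<not> key h f g u < key h f g v \<and> key h f g u < key h f g u'
        \<and> \<not> key h f g w < key h f g u'"
  then obtain u u' where u: "u \<in> {1..h}" "u' \<in> {h<..2*h}" "\<not> key h f g u < key h f g v"
     "key h f g u < key h f g u'" "\<not> key h f g w < key h f g u'" by blast
  have uN: "u \<in> N" "u' \<in> N" using u by auto
  have 1: "blk h f g v \<le> blk h f g u" using blk_key[OF uN(1) vN] u by force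
  have 2: "blk h f g u' \<le> blk h f g w" using blk_key[OF wN uN(2)] u by force
  have "\<not> rr h u < rr h u'" using rr_less[OF uN] u by auto
  hence 3: "blk h f g u < blk h f g u'" using key_less[OF uN] u by auto
  show "blk h f g v < blk h f g w" using 1 2 3 by simp
qed

end

lemma order_det:
  fixes B1 B2 :: "'a \<Rightarrow> nat"
  assumes im: "B1 ` A = B2 ` A"
    and ord: "\<And>v w. v \<in> A \<Longrightarrow> w \<in> A \<Longrightarrow> B1 v < B1 w \<longleftrightarrow> B2 v < B2 w"
    and v: "v \<in> A"
  shows "B1 v = B2 v"
proof -
  have "\<forall>v\<in>A. B1 v = t \<longrightarrow> B1 v = B2 v" for t
  proof (induction t rule: less_induct)
    case (less t)
    show ?case
    proof (intro ballI impI)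
      fix v assume vA: "v \<in> A" and vt: "B1 v = t"
      show "B1 v = B2 v"
      proof (rule ccontr)
        assume ne: "B1 v \<noteq> B2 v"
        show False
        proof (cases "B2 v < B1 v")
          case True
          have "B2 v \<in> B1 ` A" using im vA by auto
          then obtain w where w: "w \<in> A" "B1 w = B2 v" by auto
          hence "B2 w = B1 w" using less[of "B1 w"] True vt by auto
          hence "\<not> B2 w < B2 v" "\<not> B2 v < B2 w" using w by auto
          hence "\<not> B1 w < B1 v" using ord[OF w(1) vA] by simp
          thus False using w True by simp
        next
          case False
          hence lt: "B1 v < B2 v" using ne by simp
          have "B1 v \<in> B2 ` A" using im vA by auto
          then obtain w where w: "w \<in> A" "B2 w = B1 v" by auto
          hence "B1 w < B1 v" using ord[OF w(1) vA] lt by simp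
          hence "B1 w = B2 w" using less[of "B1 w"] vt w by auto
          thus False using w \<open>B1 w < B1 v\<close> by simp
        qed
      qed
    qed
  qed
  thus ?thesis using v by blast
qed

lemma perm_eq_blk:
  assumes covS1: "\<And>v. v \<in> N h \<Longrightarrow> \<exists>u\<in>{1..h}. blk h f1 g1 u = blk h f1 g1 v"
      and covL1: "\<And>v. v \<in> N h \<Longrightarrow> \<exists>u\<in>{h<..2*h}. blk h f1 g1 u = blk h f1 g1 v"
      and covS2: "\<And>v. v \<in> N h \<Longrightarrow> \<exists>u\<in>{1..h}. blk h f2 g2 u = blk h f2 g2 v"
      and covL2: "\<And>v. v \<in> N h \<Longrightarrow> \<exists>u\<in>{h<..2*h}. blk h f2 g2 u = blk h f2 g2 v"
      and eq: "perm h f1 g1 = perm h f2 g2"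
      and im: "blk h f1 g1 ` N h = blk h f2 g2 ` N h"
      and v: "v \<in> N h"
  shows "blk h f1 g1 v = blk h f2 g2 v"
proof -
  have rk: "rank h f1 g1 x = rank h f2 g2 x" if x: "x \<in> N h" for x
  proof -
    have "rank h f1 g1 x = rank h f1 g1 (perm h f2 g2 (rank h f2 g2 x))" using perm_rank[OF x] by simp
    also have "\<dots> = rank h f2 g2 x" using eq rank_perm[where h=h and f=f1 and g=g1, OF rank_range[where f=f2 and g=g2, OF x]] by simp
    finally show ?thesis .
  qed
  have kk: "key h f1 g1 x < key h f1 g1 y \<longleftrightarrow> key h f2 g2 x < key h f2 g2 y"
    if "x \<in> N h" "y \<in> N h" for x y
    using rank_less_iff[of x h y f1 g1] rank_less_iff[of x h y f2 g2] rk that by simp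
  have "blk h f1 g1 x < blk h f1 g1 y \<longleftrightarrow> blk h f2 g2 x < blk h f2 g2 y"
    if "x \<in> N h" "y \<in> N h" for x y
  proof -
    have sub: "{1..h} \<subseteq> N h" "{h<..2*h} \<subseteq> N h" by auto
    have e1: "blk h f1 g1 x < blk h f1 g1 y \<longleftrightarrow>
    (\<exists>u\<in>{1..h}. \<exists>u'\<in>{h<..2*h}. \<not> key h f1 g1 u < key h f1 g1 x \<and> key h f1 g1 u < key h f1 g1 u'
        \<and> \<not> key h f1 g1 y < key h f1 g1 u')" by (rule blk_less_char[OF covS1 covL1 that])
    have e2: "blk h f2 g2 x < blk h f2 g2 y \<longleftrightarrow>
    (\<exists>u\<in>{1..h}. \<exists>u'\<in>{h<..2*h}. \<not> key h f2 g2 u < key h f2 g2 x \<and> key h f2 g2 u < key h f2 g2 u'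
        \<and> \<not> key h f2 g2 y < key h f2 g2 u')" by (rule blk_less_char[OF covS2 covL2 that])
    show ?thesis unfolding e1 e2 using that by (auto simp: kk)
  qed
  thus ?thesis using order_det[OF im _ v] by blast
qed

definition Q :: "nat \<Rightarrow> nat set \<Rightarrow> (nat \<Rightarrow> nat) set" where
  "Q h K = {g \<in> {1..h} \<rightarrow>\<^sub>E K. g ` {1..h} = K}"

definition Phi :: "nat \<Rightarrow> (nat \<Rightarrow> nat) \<times> (nat \<Rightarrow> nat) \<Rightarrow> nat \<Rightarrow> nat" where
  "Phi h p = perm h (\<lambda>v. fst p (v - h)) (snd p)"

lemma blk_Phi: "blk h (\<lambda>v. g1 (v - h)) g2 v = (if v \<le> h then g2 v else g1 (v - h))"
  by (simp add: blk_def)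

lemma Phi_props:
  assumes g1: "g1 \<in> Q h K" and g2: "g2 \<in> Q h K"
  shows "blk h (\<lambda>v. g1 (v - h)) g2 ` N h = K"
    and "\<And>v. v \<in> N h \<Longrightarrow> \<exists>u\<in>{1..h}. blk h (\<lambda>v. g1 (v - h)) g2 u = blk h (\<lambda>v. g1 (v - h)) g2 v"
    and "\<And>v. v \<in> N h \<Longrightarrow> \<exists>u\<in>{h<..2*h}. blk h (\<lambda>v. g1 (v - h)) g2 u = blk h (\<lambda>v. g1 (v - h)) g2 v"
proof -
  have i1: "g1 ` {1..h} = K" and i2: "g2 ` {1..h} = K" using g1 g2 by (auto simp: Q_def)
  have inK: "blk h (\<lambda>v. g1 (v - h)) g2 v \<in> K" if v: "v \<in> N h" for v
  proof (cases "v \<le> h")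
    case True thus ?thesis using v i2 by (auto simp: blk_Phi)
  next
    case False
    hence "v - h \<in> {1..h}" using v by auto
    thus ?thesis using False i1 by (auto simp: blk_Phi)
  qed
  show "blk h (\<lambda>v. g1 (v - h)) g2 ` N h = K"
  proof
    show "blk h (\<lambda>v. g1 (v - h)) g2 ` N h \<subseteq> K" using inK by auto
    show "K \<subseteq> blk h (\<lambda>v. g1 (v - h)) g2 ` N h"
    proof
      fix k assume "k \<in> K"
      then obtain u where u: "u \<in> {1..h}" "k = g2 u" using i2 by auto
      hence "blk h (\<lambda>v. g1 (v - h)) g2 u = k" by (simp add: blk_Phi)
      moreover have "u \<in> N h" using u by auto
      ultimately show "k \<in> blk h (\<lambda>v. g1 (v - h)) g2 ` N h" by (metis image_eqI)
    qed
  qed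
  show "\<exists>u\<in>{1..h}. blk h (\<lambda>v. g1 (v - h)) g2 u = blk h (\<lambda>v. g1 (v - h)) g2 v" if v: "v \<in> N h" for v
  proof -
    obtain u where u: "u \<in> {1..h}" "g2 u = blk h (\<lambda>v. g1 (v - h)) g2 v"
      using inK[OF v] i2 by (metis imageE)
    hence "blk h (\<lambda>v. g1 (v - h)) g2 u = blk h (\<lambda>v. g1 (v - h)) g2 v" by (simp add: blk_Phi)
    thus ?thesis using u(1) by blast
  qed
  show "\<exists>u\<in>{h<..2*h}. blk h (\<lambda>v. g1 (v - h)) g2 u = blk h (\<lambda>v. g1 (v - h)) g2 v" if v: "v \<in> N h" for v
  proof -
    obtain s where s: "s \<in> {1..h}" "g1 s = blk h (\<lambda>v. g1 (v - h)) g2 v"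
      using inK[OF v] i1 by (metis imageE)
    have "s + h \<in> {h<..2*h}" using s by auto
    moreover have "blk h (\<lambda>v. g1 (v - h)) g2 (s + h) = g1 s" using s by (simp add: blk_Phi)
    ultimately show ?thesis using s by metis
  qed
qed

lemma finite_avoiders: "finite (avoiders_12_34 n)"
proof -
  have "avoiders_12_34 n \<subseteq> {p. p permutes {1..n}}" by (auto simp: avoiders_12_34_def)
  thus ?thesis using finite_permutations[of "{1..n}"] finite_subset by auto
qed

lemma card_Q: "card (Q h K \<times> Q h K) \<le> a_12_34 (2*h)"
  unfolding a_12_34_def
proof (rule card_inj_on_le[where f = "Phi h"])
  show "finite (avoiders_12_34 (2 * h))" by (rule finite_avoiders)
  show "Phi h ` (Q h K \<times> Q h K) \<subseteq> avoiders_12_34 (2 * h)"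
  proof clarify
    fix g1 g2 assume g: "g1 \<in> Q h K" "g2 \<in> Q h K"
    show "Phi h (g1, g2) \<in> avoiders_12_34 (2 * h)"
      unfolding avoiders_12_34_def Phi_def using perm_permutes avoid[OF Phi_props(2,3)[OF g]] by simp
  qed
  show "inj_on (Phi h) (Q h K \<times> Q h K)"
  proof (rule inj_onI, clarify)
    fix g1 g2 g1' g2' assume g: "g1 \<in> Q h K" "g2 \<in> Q h K" and g': "g1' \<in> Q h K" "g2' \<in> Q h K"
      and eq: "Phi h (g1, g2) = Phi h (g1', g2')"
    have b: "blk h (\<lambda>v. g1 (v - h)) g2 v = blk h (\<lambda>v. g1' (v - h)) g2' v" if "v \<in> N h" for v
      using perm_eq_blk[OF Phi_props(2,3)[OF g] Phi_props(2,3)[OF g'] _ _ that] eq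
        Phi_props(1)[OF g] Phi_props(1)[OF g'] unfolding Phi_def by simp
    have E: "g1 \<in> {1..h} \<rightarrow>\<^sub>E K" "g2 \<in> {1..h} \<rightarrow>\<^sub>E K" "g1' \<in> {1..h} \<rightarrow>\<^sub>E K" "g2' \<in> {1..h} \<rightarrow>\<^sub>E K"
      using g g' by (auto simp: Q_def)
    have "g2 = g2'"
    proof (rule PiE_ext[OF E(2) E(4)])
      fix s assume s: "s \<in> {1..h}"
      thus "g2 s = g2' s" using b[of s] by (auto simp: blk_Phi)
    qed
    moreover have "g1 = g1'"
    proof (rule PiE_ext[OF E(1) E(3)])
      fix s assume s: "s \<in> {1..h}"
      thus "g1 s = g1' s" using b[of "s + h"] by (auto simp: blk_Phi)
    qed
    ultimately show "g1 = g1' \<and> g2 = g2'" by simp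
  qed
qed

lemma PiE_as_union: "({1..h} \<rightarrow>\<^sub>E {..<j}) = (\<Union>K\<in>Pow {..<j}. Q h K)"
proof
  show "({1..h} \<rightarrow>\<^sub>E {..<j}) \<subseteq> (\<Union>K\<in>Pow {..<j}. Q h K)"
  proof
    fix g assume g: "g \<in> {1..h} \<rightarrow>\<^sub>E {..<j}"
    have "g ` {1..h} \<in> Pow {..<j}" using g by auto
    moreover have "g \<in> Q h (g ` {1..h})" using g by (auto simp: Q_def)
    ultimately show "g \<in> (\<Union>K\<in>Pow {..<j}. Q h K)" by blast
  qed
  show "(\<Union>K\<in>Pow {..<j}. Q h K) \<subseteq> ({1..h} \<rightarrow>\<^sub>E {..<j})"
    by (auto simp: Q_def PiE_def Pi_def image_subset_iff)
qed

lemma sum_Q: "j ^ h = (\<Sum>K\<in>Pow {..<j}. card (Q h K))"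
proof -
  have "j ^ h = card ({1..h} \<rightarrow>\<^sub>E {..<j})" by (simp add: card_PiE)
  also have "\<dots> = card (\<Union>K\<in>Pow {..<j}. Q h K)" by (subst PiE_as_union) (rule refl)
  also have "\<dots> = (\<Sum>K\<in>Pow {..<j}. card (Q h K))"
  proof (rule card_UN_disjoint)
    show "finite (Pow {..<j})" by simp
    show "\<forall>K\<in>Pow {..<j}. finite (Q h K)"
    proof
      fix K assume "K \<in> Pow {..<j}"
      hence "finite K" using finite_subset by auto
      hence "finite ({1..h} \<rightarrow>\<^sub>E K)" by (intro finite_PiE) auto
      thus "finite (Q h K)" unfolding Q_def by (rule finite_subset[rotated]) auto
    qed
    show "\<forall>K\<in>Pow {..<j}. \<forall>K'\<in>Pow {..<j}. K \<noteq> K' \<longrightarrow> Q h K \<inter> Q h K' = {}"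
      by (auto simp: Q_def)
  qed
  finally show ?thesis .
qed

lemma main_bound: "real j ^ (2*h) \<le> 4 ^ j * real (a_12_34 (2*h))"
proof -
  have "real j ^ (2*h) = (\<Sum>K\<in>Pow {..<j}. real (card (Q h K)))\<^sup>2"
  proof -
    have "real j ^ (2*h) = (real (j ^ h))\<^sup>2" by (simp add: power_mult power_mult_distrib mult.commute)
    also have "\<dots> = (\<Sum>K\<in>Pow {..<j}. real (card (Q h K)))\<^sup>2" by (subst sum_Q) simp
    finally show ?thesis .
  qed
  also have "\<dots> \<le> (\<Sum>K\<in>Pow {..<j}. (real (card (Q h K)))\<^sup>2) * card (Pow {..<j})"
    by (rule sum_squared_le_sum_of_squares)
  also have "\<dots> \<le> (\<Sum>K\<in>Pow {..<j}. real (a_12_34 (2*h))) * card (Pow {..<j})"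
  proof (intro mult_right_mono sum_mono)
    fix K
    have "(real (card (Q h K)))\<^sup>2 = real (card (Q h K \<times> Q h K))"
      by (simp add: card_cartesian_product power2_eq_square)
    also have "\<dots> \<le> real (a_12_34 (2*h))" using card_Q by simp
    finally show "(real (card (Q h K)))\<^sup>2 \<le> real (a_12_34 (2*h))" .
  qed simp
  also have "\<dots> = 4 ^ j * real (a_12_34 (2*h))"
  proof -
    have "(2::real) ^ j * 2 ^ j = 4 ^ j" by (simp flip: power_mult_distrib)
    thus ?thesis by (simp add: card_Pow)
  qed
  finally show ?thesis .
qed

definition shift :: "nat \<Rightarrow> (nat \<Rightarrow> nat) \<Rightarrow> nat \<Rightarrow> nat" where
  "shift n \<sigma> p = (if p = 1 then Suc n else if 2 \<le> p \<and> p \<le> Suc n then \<sigma> (p - 1) else p)"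

lemma shift_avoid:
  assumes s: "\<sigma> \<in> avoiders_12_34 n"
  shows "shift n \<sigma> \<in> avoiders_12_34 (Suc n)"
proof -
  have perm: "\<sigma> permutes {1..n}" and nc: "\<not> contains_12_34 n \<sigma>"
    using s by (auto simp: avoiders_12_34_def)
  have inS: "\<sigma> p \<in> {1..n}" if "p \<in> {1..n}" for p using permutes_in_image[OF perm, of p] that by simp
  have injs: "inj \<sigma>" using perm permutes_inj by blast
  have sh: "shift n \<sigma> p = \<sigma> (p - 1)" if "2 \<le> p" "p \<le> Suc n" for p
    using that by (simp add: shift_def)
  have sh1: "shift n \<sigma> 1 = Suc n" by (simp add: shift_def)
  have shv: "shift n \<sigma> p \<le> n" "1 \<le> shift n \<sigma> p" if "2 \<le> p" "p \<le> Suc n" for p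
  proof -
    have "p - 1 \<in> {1..n}" using that by auto
    thus "shift n \<sigma> p \<le> n" "1 \<le> shift n \<sigma> p" using inS[of "p - 1"] sh[OF that] by auto
  qed
  have img: "shift n \<sigma> ` {1..Suc n} \<subseteq> {1..Suc n}"
  proof
    fix x assume "x \<in> shift n \<sigma> ` {1..Suc n}"
    then obtain p where p: "p \<in> {1..Suc n}" "x = shift n \<sigma> p" by auto
    show "x \<in> {1..Suc n}"
    proof (cases "p = 1")
      case True thus ?thesis using p sh1 by simp
    next
      case False
      hence "2 \<le> p" "p \<le> Suc n" using p by auto
      thus ?thesis using p shv by fastforce
    qed
  qed
  have inj: "inj_on (shift n \<sigma>) {1..Suc n}"
  proof (rule inj_onI)
    fix p q assume p: "p \<in> {1..Suc n}" and q: "q \<in> {1..Suc n}" and e: "shift n \<sigma> p = shift n \<sigma> q"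
    show "p = q"
    proof (cases "p = 1")
      case pt: True
      show ?thesis
      proof (rule ccontr)
        assume "p \<noteq> q"
        hence "2 \<le> q" "q \<le> Suc n" using q pt by auto
        hence "shift n \<sigma> q \<le> n" using shv by blast
        thus False using e pt sh1 by simp
      qed
    next
      case pf: False
      hence p2: "2 \<le> p" "p \<le> Suc n" using p by auto
      show ?thesis
      proof (cases "q = 1")
        case True
        have "shift n \<sigma> p \<le> n" using shv p2 by blast
        thus ?thesis using e True sh1 by simp
      next
        case False
        hence q2: "2 \<le> q" "q \<le> Suc n" using q by auto
        have "\<sigma> (p - 1) = \<sigma> (q - 1)" using e sh[OF p2] sh[OF q2] by simp
        hence "p - 1 = q - 1" using injs by (simp add: inj_eq)
        thus "p = q" using p2 q2 by simp
      qed
    qed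
  qed
  have bij: "bij_betw (shift n \<sigma>) {1..Suc n} {1..Suc n}"
    unfolding bij_betw_def using inj endo_inj_surj[OF _ img inj] by simp
  have permS: "shift n \<sigma> permutes {1..Suc n}"
    by (rule bij_imp_permutes[OF bij]) (auto simp: shift_def)
  have ncS: "\<not> contains_12_34 (Suc n) (shift n \<sigma>)"
  proof
    assume "contains_12_34 (Suc n) (shift n \<sigma>)"
    then obtain i j where ij: "1 \<le> i" "i < j" "j + 1 \<le> Suc n"
      "shift n \<sigma> i < shift n \<sigma> (i + 1)" "shift n \<sigma> (i + 1) < shift n \<sigma> j"
      "shift n \<sigma> j < shift n \<sigma> (j + 1)"
      unfolding contains_12_34_def by blast
    show False
    proof (cases "i = 1")
      case True
      have "shift n \<sigma> (i + 1) \<le> n" using shv[of "i+1"] ij True by simp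
      thus False using ij True sh1 by simp
    next
      case False
      have a1: "shift n \<sigma> i = \<sigma> (i - 1)" using sh[of i] ij False by simp
      have a2: "shift n \<sigma> (i + 1) = \<sigma> (i - 1 + 1)" using sh[of "i+1"] ij False by simp
      have a3: "shift n \<sigma> j = \<sigma> (j - 1)" using sh[of j] ij False by simp
      have a4: "shift n \<sigma> (j + 1) = \<sigma> (j - 1 + 1)" using sh[of "j+1"] ij False by simp
      have "contains_12_34 n \<sigma>"
        unfolding contains_12_34_def
      proof (intro exI conjI)
        show "1 \<le> i - 1" "i - 1 < j - 1" "j - 1 + 1 \<le> n" using ij False by auto
        show "\<sigma> (i - 1) < \<sigma> (i - 1 + 1)" "\<sigma> (i - 1 + 1) < \<sigma> (j - 1)" "\<sigma> (j - 1) < \<sigma> (j - 1 + 1)"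
          using ij(4,5,6) unfolding a1 a2 a3 a4 by auto
      qed
      thus False using nc by simp
    qed
  qed
  show ?thesis using permS ncS by (simp add: avoiders_12_34_def)
qed

lemma a_mono_Suc: "a_12_34 n \<le> a_12_34 (Suc n)"
  unfolding a_12_34_def
proof (rule card_inj_on_le[where f = "shift n"])
  show "shift n ` avoiders_12_34 n \<subseteq> avoiders_12_34 (Suc n)" using shift_avoid by auto
  show "finite (avoiders_12_34 (Suc n))" by (rule finite_avoiders)
  show "inj_on (shift n) (avoiders_12_34 n)"
  proof (rule inj_onI)
    fix \<sigma> \<tau> assume s: "\<sigma> \<in> avoiders_12_34 n" and t: "\<tau> \<in> avoiders_12_34 n"
      and e: "shift n \<sigma> = shift n \<tau>"
    have ps: "\<sigma> permutes {1..n}" and pt: "\<tau> permutes {1..n}" using s t by (auto simp: avoiders_12_34_def)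
    show "\<sigma> = \<tau>"
    proof
      fix p
      show "\<sigma> p = \<tau> p"
      proof (cases "p \<in> {1..n}")
        case True
        have "shift n \<sigma> (Suc p) = shift n \<tau> (Suc p)" using e by simp
        moreover have "shift n \<sigma> (Suc p) = \<sigma> p" "shift n \<tau> (Suc p) = \<tau> p"
          using True by (simp_all add: shift_def)
        ultimately show ?thesis by simp
      next
        case False
        thus ?thesis using ps pt by (simp add: permutes_not_in)
      qed
    qed
  qed
qed

lemma a_mono: "m \<le> n \<Longrightarrow> a_12_34 m \<le> a_12_34 n"
  by (induction n rule: dec_induct) (auto intro: le_trans a_mono_Suc)

lemma e_pow_le: "n \<ge> 1 \<Longrightarrow> exp 1 * real n ^ (n+1) \<le> real (Suc n) ^ (n+1)"
proof -
  assume n: "n \<ge> 1"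
  have pos: "real n > 0" using n by simp
  have "ln (real n / real (Suc n)) \<le> real n / real (Suc n) - 1" by (rule ln_le_minus_one) (use pos in simp)
  also have "\<dots> = - 1 / real (Suc n)" by (simp add: field_simps)
  finally have "ln (real n / real (Suc n)) \<le> - 1 / real (Suc n)" .
  hence "ln (real n) - ln (real (Suc n)) \<le> - 1 / real (Suc n)" using pos by (simp add: ln_div)
  hence "real (Suc n) * (ln (real n) - ln (real (Suc n))) \<le> - 1"
    by (simp add: field_simps del: of_nat_Suc)
  hence le: "1 + real (n+1) * ln (real n) \<le> real (n+1) * ln (real (Suc n))"
    by (simp add: algebra_simps del: of_nat_Suc)
  have "exp 1 * real n ^ (n+1) = exp (1 + real (n+1) * ln (real n))"
    using pos by (simp add: exp_add ln_realpow[symmetric] del: of_nat_Suc)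
  also have "\<dots> \<le> exp (real (n+1) * ln (real (Suc n)))" using le by simp
  also have "\<dots> = real (Suc n) ^ (n+1)" by (simp add: ln_realpow[symmetric] del: of_nat_Suc)
  finally show ?thesis .
qed

lemma fact_bound: "n \<ge> 1 \<Longrightarrow> fact n \<le> exp 1 * real n ^ (n+1) / exp (real n)"
proof (induction n rule: dec_induct)
  case base thus ?case by simp
next
  case (step n)
  have "(fact (Suc n) :: real) = real (Suc n) * fact n" by simp
  also have "\<dots> \<le> real (Suc n) * (exp 1 * real n ^ (n+1) / exp (real n))"
    using step.IH by (intro mult_left_mono) auto
  also have "\<dots> = real (Suc n) * (exp 1 * (exp 1 * real n ^ (n+1)) / exp (real (Suc n)))"
  proof -
    have "exp (real (Suc n)) = exp 1 * exp (real n)" by (simp add: exp_add[symmetric] add.commute)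
    thus ?thesis by simp
  qed
  also have "\<dots> \<le> real (Suc n) * (exp 1 * real (Suc n) ^ (n+1) / exp (real (Suc n)))"
    using e_pow_le[OF step.hyps(1)] by (intro mult_left_mono divide_right_mono) auto
  also have "\<dots> = exp 1 * real (Suc n) ^ (Suc n + 1) / exp (real (Suc n))"
    by (simp del: of_nat_Suc)
  finally show ?case .
qed

lemma ln4_gt1: "ln (4::real) > 1"
proof -
  have "exp 1 < (4::real)" using exp_le by simp
  hence "ln (exp 1) < ln (4::real)" by (subst ln_less_cancel_iff) auto
  thus ?thesis by simp
qed

lemma ln4_eq: "ln (4::real) = 2 * ln 2"
proof -
  have "ln (4::real) = ln (2^2)" by simp
  thus ?thesis by (subst (asm) ln_realpow) simp
qed

definition LL :: "real \<Rightarrow> real" where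
  "LL x = ((x - 1) * ln ((x - 1) / ln 4 - 1) - 1 - (x + 1) * ln x) / x"

lemma LL_lim: "((\<lambda>n. exp (LL (real n))) \<longlongrightarrow> 1 / ln 4) sequentially"
proof -
  have "((\<lambda>x::real. ((x - 1) * ln ((x - 1)/c - 1) - 1 - (x+1) * ln x) / x) \<longlongrightarrow> ln (inverse c)) at_top"
    if "c > 1" for c :: real
    using that by real_asymp
  from this[OF ln4_gt1] have "(LL \<longlongrightarrow> ln (1 / ln 4)) at_top" unfolding LL_def by (simp add: inverse_eq_divide)
  hence "((\<lambda>n. LL (real n)) \<longlongrightarrow> ln (1 / ln 4)) sequentially"
    by (rule filterlim_compose[OF _ filterlim_real_sequentially])
  hence "((\<lambda>n. exp (LL (real n))) \<longlongrightarrow> exp (ln (1 / ln 4))) sequentially"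
    by (rule tendsto_exp)
  moreover have "exp (ln (1 / ln (4::real))) = 1 / ln 4" using ln4_gt1 by simp
  ultimately show ?thesis by simp
qed

lemma pointwise:
  assumes n4: "n \<ge> 4"
  shows "exp (LL (real n)) \<le> root n (real (a_12_34 n) / fact n)"
proof -
  define c :: real where "c = ln 4"
  define h where "h = n div 2"
  define j where "j = nat \<lfloor>real h / ln 2\<rfloor>"
  define b where "b = (real n - 1) / c - 1"
  have l2: "ln (2::real) > 0" "ln (2::real) < 1" using ln_2_less_1 by auto
  have c2: "c = 2 * ln 2" unfolding c_def by (rule ln4_eq)
  have h2: "h \<ge> 2" "2*h \<le> n" "n \<le> 2*h + 1" unfolding h_def using n4 by auto
  have hl: "real h / ln 2 \<ge> 0" using l2 by simp
  have rj: "real j = of_int \<lfloor>real h / ln 2\<rfloor>" unfolding j_def using hl by simp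
  have j1: "real j \<le> real h / ln 2" "real j \<ge> real h / ln 2 - 1" unfolding rj by linarith+
  have "real h / ln 2 \<ge> 2" using h2 l2 by (simp add: field_simps)
  hence j2: "real j \<ge> 1" unfolding rj by linarith
  have bpos: "b > 0"
  proof -
    have "c < 2" using c2 l2 by simp
    moreover have "real n - 1 \<ge> 3" using n4 by simp
    ultimately have "(real n - 1) / c > 1" using c2 l2 by (simp add: field_simps)
    thus ?thesis unfolding b_def by simp
  qed
  have bj: "b \<le> real j"
  proof -
    have e: "real h / ln 2 = 2 * real h / c" using c2 by simp
    have hh: "2 * real h \<ge> real n - 1" using h2 by linarith
    have cpos: "c > 0" using c2 l2 by simp
    have "(real n - 1) / c \<le> 2 * real h / c" by (rule divide_right_mono) (use hh cpos in auto)
    hence "real h / ln 2 \<ge> (real n - 1) / c" using e by simp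
    thus ?thesis using j1 unfolding b_def by linarith
  qed
  have pow: "b ^ (n - 1) \<le> real j ^ (2*h)"
  proof -
    have "b ^ (n - 1) \<le> real j ^ (n - 1)" using bj bpos by (intro power_mono) auto
    also have "\<dots> \<le> real j ^ (2*h)" using j2 h2 by (intro power_increasing) auto
    finally show ?thesis .
  qed
  have four: "(4::real) ^ j \<le> exp (real n)"
  proof -
    have "(4::real) ^ j = exp (real j * c)" unfolding c_def by (simp add: exp_of_nat_mult)
    also have "\<dots> \<le> exp (real n)"
    proof -
      have "real j * c = 2 * (real j * ln 2)" using c2 by simp
      also have "\<dots> \<le> 2 * real h" using j1 l2 by (simp add: field_simps)
      also have "\<dots> \<le> real n" using h2 by linarith
      finally show ?thesis by simp
    qed
    finally show ?thesis .
  qed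
  have alow: "b ^ (n - 1) / exp (real n) \<le> real (a_12_34 n)"
  proof -
    have "b ^ (n - 1) / exp (real n) \<le> real j ^ (2*h) / 4 ^ j"
      using pow four bpos by (intro frac_le) auto
    also have "\<dots> \<le> real (a_12_34 (2*h))" using main_bound[of j h] by (simp add: field_simps)
    also have "\<dots> \<le> real (a_12_34 n)" using a_mono[OF h2(2)] by simp
    finally show ?thesis .
  qed
  define B where "B = b ^ (n - 1) / (exp 1 * real n ^ (n+1))"
  have Bpos: "B > 0" unfolding B_def using bpos n4 by simp
  have fb: "fact n \<le> exp 1 * real n ^ (n+1) / exp (real n)" using fact_bound n4 by simp
  have fpos: "(fact n :: real) > 0" by simp
  have BL: "B \<le> real (a_12_34 n) / fact n"
  proof -
    have "B = (b ^ (n - 1) / exp (real n)) / (exp 1 * real n ^ (n+1) / exp (real n))"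
      unfolding B_def by (simp add: field_simps)
    also have "\<dots> \<le> real (a_12_34 n) / fact n"
      using alow fb fpos bpos by (intro frac_le) auto
    finally show ?thesis .
  qed
  have lnB: "ln B = (real n - 1) * ln b - 1 - (real n + 1) * ln (real n)"
  proof -
    have "ln B = ln (b ^ (n - 1)) - (ln (exp 1) + ln (real n ^ (n+1)))"
      unfolding B_def using bpos n4 by (simp add: ln_div ln_mult)
    also have "\<dots> = real (n - 1) * ln b - 1 - real (n+1) * ln (real n)" by (simp only: ln_realpow ln_exp)
    also have "\<dots> = (real n - 1) * ln b - 1 - (real n + 1) * ln (real n)" using n4 by (simp add: of_nat_diff)
    finally show ?thesis .
  qed
  have "exp (LL (real n)) = exp (ln B / real n)"
    unfolding LL_def lnB b_def c_def by simp
  also have "\<dots> = root n B"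
    using Bpos n4 by (simp add: root_powr_inverse powr_def)
  also have "\<dots> \<le> root n (real (a_12_34 n) / fact n)" using BL n4 by simp
  finally show ?thesis .
qed

theorem proposition12:
  shows "liminf (\<lambda>n. ereal (root n (real (a_12_34 n) / fact n))) \<ge> ereal (1 / ln 4)"
proof -
  have "liminf (\<lambda>n. ereal (exp (LL (real n)))) = ereal (1 / ln 4)"
    by (rule lim_imp_Liminf) (auto intro: LL_lim)
  moreover have "liminf (\<lambda>n. ereal (exp (LL (real n)))) \<le> liminf (\<lambda>n. ereal (root n (real (a_12_34 n) / fact n)))"
    by (rule Liminf_mono) (use pointwise in \<open>auto simp: eventually_at_top_linorder intro: exI[of _ 4]\<close>)
  ultimately show ?thesis by simp
qed

end
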